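(* Under the assumptions on $\Psi$ stated in the context, let $T\in(0,\infty]$, let $g^{in}\in L^1_{-2\beta,1}(0,\infty)$ be non-negative, let $g$ be a weak solution on $[0,T)$, and let $t\in(0,T)$. Then (i) for every $q\in(0,\infty)$, $\int_q^\infty[g(\zeta,t)-g^{in}(\zeta)]d\zeta=-\frac12\int_0^t\int_q^\infty\int_q^\infty\Psi(\zeta,\eta)g(\zeta,s)g(\eta,s)d\eta d\zeta ds+\frac12\int_0^t\int_0^q\int_{q-\zeta}^q\Psi(\zeta,\eta)g(\zeta,s)g(\eta,s)d\eta d\zeta ds;$ (ii) $\lim_{q\to\infty}\int_0^t q\Big[\int_0^q\int_{q-\zeta}^q\Psi(\zeta,\eta)g(\zeta,s)g(\eta,s)d\eta d\zeta-\int_q^\infty\int_q^\infty\Psi(\zeta,\eta)g(\zeta,s)g(\eta,s)d\eta d\zeta\Big]ds=0.$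
   Context: $\Psi:(0,\infty)^2\to[0,\infty)$ is measurable and symmetric and there are $\beta>0$, $k>0$ with $\Psi(\zeta,\eta)\le k(\zeta\eta)^{-\beta}$ on $(0,1)^2$, $\Psi(\zeta,\eta)\le k\eta\zeta^{-\beta}$ on $(0,1)\times(1,\infty)$, and $\Psi(\zeta,\eta)\le k(\zeta+\eta)$ on $(1,\infty)^2$. $L^1_{-2\beta,1}(0,\infty):=L^1((0,\infty);(\zeta^{-2\beta}+\zeta)d\zeta)$. A weak solution on $[0,T)$ is a non-negative $g\in\mathcal{C}([0,T);L^1(0,\infty))\cap L^\infty(0,T;L^1_{-2\beta,1}(0,\infty))$ such that for every $t\in(0,T)$ and $\omega\in L^\infty(0,\infty)$, $\int_0^\infty[g(\zeta,t)-g^{in}(\zeta)]\omega(\zeta)d\zeta=\frac12\int_0^t\int_0^\infty\int_0^\infty[\omega(\zeta+\eta)-\omega(\zeta)-\omega(\eta)]\Psi(\zeta,\eta)g(\zeta,s)g(\eta,s)d\eta d\zeta ds$. *)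

theory Defs
  imports "HOL-Analysis.Analysis"
begin

definition kernel_assms :: "(real \<Rightarrow> real \<Rightarrow> real) \<Rightarrow> real \<Rightarrow> real \<Rightarrow> bool" where
  "kernel_assms Psi \<beta> k \<longleftrightarrow>
     \<beta> > 0 \<and> k > 0 \<and>
     set_borel_measurable borel ({0<..} \<times> {0<..}) (\<lambda>(z, e). Psi z e) \<and>
     (\<forall>z>0. \<forall>e>0. Psi z e \<ge> 0 \<and> Psi z e = Psi e z) \<and>
     (\<forall>z e. 0 < z \<and> z < 1 \<and> 0 < e \<and> e < 1 \<longrightarrow> Psi z e \<le> k * (z * e) powr (- \<beta>)) \<and>
     (\<forall>z e. 0 < z \<and> z < 1 \<and> 1 < e \<longrightarrow> Psi z e \<le> k * e * z powr (- \<beta>)) \<and>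
     (\<forall>z e. 1 < z \<and> 1 < e \<longrightarrow> Psi z e \<le> k * (z + e))"

definition in_L1w :: "real \<Rightarrow> (real \<Rightarrow> real) \<Rightarrow> bool" where
  "in_L1w \<beta> f \<longleftrightarrow> f \<in> borel_measurable lborel \<and>
     set_integrable lborel {0<..} (\<lambda>x. f x * (x powr (-2 * \<beta>) + x))"

definition wnorm :: "real \<Rightarrow> (real \<Rightarrow> real) \<Rightarrow> real" where
  "wnorm \<beta> f = (\<integral>x\<in>{0<..}. \<bar>f x\<bar> * (x powr (-2 * \<beta>) + x) \<partial>lborel)"

text \<open>Weak solution on [0,T): g z s is the value at size z and time s.\<close>
definition weak_solution ::
  "(real \<Rightarrow> real \<Rightarrow> real) \<Rightarrow> real \<Rightarrow> ereal \<Rightarrow> (real \<Rightarrow> real) \<Rightarrow> (real \<Rightarrow> real \<Rightarrow> real) \<Rightarrow> bool" where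
  "weak_solution Psi \<beta> T gin g \<longleftrightarrow>
     (\<lambda>(z, s). g z s) \<in> borel_measurable borel \<and>
     (\<forall>s z. 0 \<le> s \<and> ereal s < T \<and> 0 < z \<longrightarrow> g z s \<ge> 0) \<and>
     (\<forall>s. 0 \<le> s \<and> ereal s < T \<longrightarrow> set_integrable lborel {0<..} (\<lambda>z. g z s)) \<and>
     (\<forall>s0. 0 \<le> s0 \<and> ereal s0 < T \<longrightarrow>
        ((\<lambda>s. \<integral>z\<in>{0<..}. \<bar>g z s - g z s0\<bar> \<partial>lborel) \<longlongrightarrow> 0)
          (at s0 within {s. 0 \<le> s \<and> ereal s < T})) \<and>
     (\<forall>s. 0 \<le> s \<and> ereal s < T \<longrightarrow> in_L1w \<beta> (\<lambda>z. g z s)) \<and>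
     (\<exists>C. \<forall>s. 0 \<le> s \<and> ereal s < T \<longrightarrow> wnorm \<beta> (\<lambda>z. g z s) \<le> C) \<and>
     (\<forall>t \<omega>. 0 < t \<and> ereal t < T \<and> \<omega> \<in> borel_measurable borel \<and> (\<exists>M. \<forall>x>0. \<bar>\<omega> x\<bar> \<le> M) \<longrightarrow>
        (\<integral>z\<in>{0<..}. (g z t - gin z) * \<omega> z \<partial>lborel) =
        1/2 * (\<integral>s\<in>{0..t}. (\<integral>z\<in>{0<..}. (\<integral>e\<in>{0<..}.
           (\<omega> (z + e) - \<omega> z - \<omega> e) * Psi z e * g z s * g e s \<partial>lborel) \<partial>lborel) \<partial>lborel))"

end

theory Submission
  imports Defs
begin

definition phi :: "real \<Rightarrow> real \<Rightarrow> real" where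
  "phi \<beta> x = x powr (-\<beta>) + x + 1"

lemma phi_ge1: "x \<ge> 0 \<Longrightarrow> phi \<beta> x \<ge> 1"
  unfolding phi_def by auto

lemma phi_le:
  assumes "\<beta> > 0" "x > 0"
  shows "phi \<beta> x \<le> 3 * (x powr (-2*\<beta>) + x)"
proof (cases "x < 1")
  case True
  have a: "x powr (-\<beta>) \<le> x powr (-2*\<beta>)"
    using assms True by (intro powr_mono') auto
  have b: "1 \<le> x powr (-2*\<beta>)"
    using assms True by (simp add: ge_one_powr_ge_zero powr_minus_divide less_imp_le powr_le1)
  show ?thesis using a b assms unfolding phi_def by auto
next
  case False
  have a: "x powr (-\<beta>) \<le> 1" using assms False by (simp add: powr_minus_divide ge_one_powr_ge_zero)
  have "0 \<le> x powr (-2*\<beta>)" by simp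
  moreover have "3 * (x powr (-2*\<beta>) + x) = 3 * x powr (-2*\<beta>) + 3 * x" by simp
  ultimately show ?thesis using a assms False unfolding phi_def by linarith
qed

lemma psi_bnd:
  assumes K: "kernel_assms Psi \<beta> k" and z: "0 < z" "z \<noteq> 1" and e: "0 < e" "e \<noteq> 1"
  shows "Psi z e \<le> k * phi \<beta> z * phi \<beta> e"
proof -
  from K have kp: "k > 0" and bp: "\<beta> > 0" and sym: "Psi z e = Psi e z"
    and b1: "\<And>z e. 0 < z \<and> z < 1 \<and> 0 < e \<and> e < 1 \<Longrightarrow> Psi z e \<le> k * (z * e) powr (- \<beta>)"
    and b2: "\<And>z e. 0 < z \<and> z < 1 \<and> 1 < e \<Longrightarrow> Psi z e \<le> k * e * z powr (- \<beta>)"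
    and b3: "\<And>z e. 1 < z \<and> 1 < e \<Longrightarrow> Psi z e \<le> k * (z + e)"
    using z e unfolding kernel_assms_def by auto
  have pz: "z powr (-\<beta>) \<ge> 0" "e powr (-\<beta>) \<ge> 0" by auto
  consider "z < 1" "e < 1" | "z < 1" "e > 1" | "z > 1" "e < 1" | "z > 1" "e > 1"
    using z e by linarith
  then show ?thesis
  proof cases
    case 1
    then have "Psi z e \<le> k * (z powr (-\<beta>) * e powr (-\<beta>))"
      using b1[of z e] z e by (simp add: powr_mult)
    also have "\<dots> \<le> k * (phi \<beta> z * phi \<beta> e)"
      using kp pz z e by (intro mult_left_mono mult_mono) (auto simp: phi_def)
    finally show ?thesis by simp
  next
    case 2
    then have "Psi z e \<le> k * (z powr (-\<beta>) * e)"
      using b2[of z e] z e by (simp add: algebra_simps)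
    also have "\<dots> \<le> k * (phi \<beta> z * phi \<beta> e)"
      using kp pz z e by (intro mult_left_mono mult_mono) (auto simp: phi_def)
    finally show ?thesis by simp
  next
    case 3
    then have "Psi z e \<le> k * (z * e powr (-\<beta>))"
      using b2[of e z] z e sym by (simp add: algebra_simps)
    also have "\<dots> \<le> k * (phi \<beta> z * phi \<beta> e)"
      using kp pz z e by (intro mult_left_mono mult_mono) (auto simp: phi_def)
    finally show ?thesis by simp
  next
    case 4
    then have "Psi z e \<le> k * (z + e)" using b3 by auto
    also have "z + e \<le> (z + 1) * (e + 1)" using z e by (simp add: algebra_simps)
    also have "(z + 1) * (e + 1) \<le> phi \<beta> z * phi \<beta> e"
      using pz z e by (intro mult_mono) (auto simp: phi_def)
    finally show ?thesis using kp by simp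
  qed
qed

lemma integral_cong_pt:
  fixes f g :: "real \<Rightarrow> real"
  assumes "f \<in> borel_measurable lborel" "\<And>x. x \<noteq> c \<Longrightarrow> f x = g x"
  shows "integral\<^sup>L lborel f = integral\<^sup>L lborel g"
proof -
  have "g \<in> borel_measurable lborel"
    by (rule measurable_discrete_difference[where X="{c}", OF assms(1)]) (auto simp: assms(2))
  then show ?thesis
    by (intro integral_cong_AE assms(1)) (use AE_lborel_singleton[of c] assms(2) in auto)
qed

lemma meas_Icc[measurable]:
  fixes a b :: "'a \<Rightarrow> real"
  assumes [measurable]: "a \<in> borel_measurable M" "b \<in> borel_measurable M"
  shows "Measurable.pred M (\<lambda>x. a x \<in> {b x..c})" "Measurable.pred M (\<lambda>x. a x \<in> {b x..<c})"
  by (simp_all add: atLeastAtMost_iff atLeastLessThan_iff) measurable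

locale slice =
  fixes P :: "real \<Rightarrow> real \<Rightarrow> real" and \<beta> k :: real and G :: "real \<Rightarrow> real"
  assumes Pmeas: "(\<lambda>(z, e). P z e) \<in> borel_measurable borel"
    and Pnn: "\<And>z e. 0 \<le> P z e"
    and Pzero: "\<And>z e. \<not> (0 < z \<and> 0 < e) \<Longrightarrow> P z e = 0"
    and Pbnd: "\<And>z e. 0 < z \<Longrightarrow> 0 < e \<Longrightarrow> z \<noteq> 1 \<Longrightarrow> e \<noteq> 1 \<Longrightarrow> P z e \<le> k * phi \<beta> z * phi \<beta> e"
    and bpos: "\<beta> > 0" and kpos: "k > 0"
    and Gmeas: "G \<in> borel_measurable borel"
    and Gnn: "\<And>z. 0 < z \<Longrightarrow> 0 \<le> G z"
    and Gint: "set_integrable lborel {0<..} (\<lambda>z. G z * (z powr (-2*\<beta>) + z))"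
begin

definition "J = (LINT z:{0<..}|lborel. phi \<beta> z * G z)"

lemma phiG_int: "set_integrable lborel {0<..} (\<lambda>z. phi \<beta> z * G z)"
  unfolding set_integrable_def
proof (rule Bochner_Integration.integrable_bound[where f="\<lambda>z. indicator {0<..} z *\<^sub>R (3 * (G z * (z powr (-2*\<beta>) + z)))"])
  show "integrable lborel (\<lambda>z. indicator {0<..} z *\<^sub>R (3 * (G z * (z powr (-2*\<beta>) + z))))"
  proof -
    have e: "(\<lambda>z. indicator {0<..} z *\<^sub>R (3 * (G z * (z powr (-2*\<beta>) + z)))) =
          (\<lambda>z. 3 * (indicator {0<..} z *\<^sub>R (G z * (z powr (-2*\<beta>) + z))))"
      by (auto simp: fun_eq_iff)
    show ?thesis unfolding e using Gint unfolding set_integrable_def by auto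
  qed
  show "(\<lambda>z. indicator {0<..} z *\<^sub>R (phi \<beta> z * G z)) \<in> borel_measurable lborel"
    using Gmeas unfolding phi_def by simp
  show "AE z in lborel. norm (indicator {0<..} z *\<^sub>R (phi \<beta> z * G z)) \<le>
      norm (indicator {0<..} z *\<^sub>R (3 * (G z * (z powr (-2*\<beta>) + z))))"
  proof (intro AE_I2)
    fix z :: real
    show "norm (indicator {0<..} z *\<^sub>R (phi \<beta> z * G z)) \<le>
      norm (indicator {0<..} z *\<^sub>R (3 * (G z * (z powr (-2*\<beta>) + z))))"
    proof (cases "z > 0")
      case True
      have "phi \<beta> z * G z \<le> (3 * (z powr (-2*\<beta>) + z)) * G z"
        using phi_le[OF bpos True] Gnn[OF True] by (intro mult_right_mono) auto
      moreover have "0 \<le> phi \<beta> z * G z" using phi_ge1[of z \<beta>] Gnn[OF True] True by auto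
      ultimately show ?thesis using True by (simp add: algebra_simps)
    qed simp
  qed
qed

lemma J_nonneg: "J \<ge> 0"
  unfolding J_def set_lebesgue_integral_def
  by (intro integral_nonneg_AE AE_I2) (auto simp: indicator_def intro!: mult_nonneg_nonneg Gnn order.trans[OF _ phi_ge1])

lemma J_le: "J \<le> 3 * wnorm \<beta> G"
proof -
  have "J \<le> (LINT z:{0<..}|lborel. 3 * (\<bar>G z\<bar> * (z powr (-2*\<beta>) + z)))"
    unfolding J_def set_lebesgue_integral_def
  proof (rule integral_mono_AE')
    show "integrable lborel (\<lambda>z. indicator {0<..} z *\<^sub>R (3 * (\<bar>G z\<bar> * (z powr (-2*\<beta>) + z))))"
    proof -
      have e: "(\<lambda>z. indicator {0<..} z *\<^sub>R (3 * (\<bar>G z\<bar> * (z powr (-2*\<beta>) + z)))) =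
          (\<lambda>z. 3 * (indicator {0<..} z *\<^sub>R (G z * (z powr (-2*\<beta>) + z))))"
        by (auto simp: indicator_def Gnn fun_eq_iff)
      show ?thesis unfolding e using Gint unfolding set_integrable_def by auto
    qed
    show "AE z in lborel. indicator {0<..} z *\<^sub>R (phi \<beta> z * G z) \<le> indicator {0<..} z *\<^sub>R (3 * (\<bar>G z\<bar> * (z powr (-2*\<beta>) + z)))"
    proof (intro AE_I2)
      fix z :: real
      show "indicator {0<..} z *\<^sub>R (phi \<beta> z * G z) \<le> indicator {0<..} z *\<^sub>R (3 * (\<bar>G z\<bar> * (z powr (-2*\<beta>) + z)))"
      proof (cases "z > 0")
        case True
        have "phi \<beta> z * G z \<le> (3 * (z powr (-2*\<beta>) + z)) * G z"
          using phi_le[OF bpos True] Gnn[OF True] by (intro mult_right_mono) auto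
        then show ?thesis using True Gnn[OF True] by (simp add: algebra_simps)
      qed simp
    qed
    show "AE z in lborel. 0 \<le> indicator {0<..} z *\<^sub>R (3 * (\<bar>G z\<bar> * (z powr (-2*\<beta>) + z)))"
      by (intro AE_I2) (auto simp: indicator_def)
  qed
  also have "\<dots> = 3 * wnorm \<beta> G"
  proof -
    have e: "(\<lambda>z. indicator {0<..} z *\<^sub>R (3 * (\<bar>G z\<bar> * (z powr (-2*\<beta>) + z)))) =
          (\<lambda>z. 3 * (indicator {0<..} z *\<^sub>R (\<bar>G z\<bar> * (z powr (-2*\<beta>) + z))))"
      by (auto simp: fun_eq_iff)
    show ?thesis unfolding wnorm_def set_lebesgue_integral_def e by (rule integral_mult_right_zero)
  qed
  finally show ?thesis .
qed

lemma phiG_nonneg: "0 \<le> indicator {0<..} e *\<^sub>R (phi \<beta> e * G e)"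
  by (auto simp: indicator_def intro!: mult_nonneg_nonneg Gnn order.trans[OF _ phi_ge1])

lemma phiG_integrable: "integrable lborel (\<lambda>e. c * (indicator {0<..} e *\<^sub>R (phi \<beta> e * G e)))"
  using phiG_int unfolding set_integrable_def by auto

lemma inner_bnd:
  assumes z: "0 < z" "z \<noteq> 1"
  shows "\<bar>LINT e:S|lborel. P z e * G z * G e\<bar> \<le> k * J * phi \<beta> z * G z"
proof -
  let ?c = "k * phi \<beta> z * G z"
  have "\<bar>LINT e:S|lborel. P z e * G z * G e\<bar> \<le> (\<integral>e. \<bar>indicator S e *\<^sub>R (P z e * G z * G e)\<bar> \<partial>lborel)"
    unfolding set_lebesgue_integral_def by (rule integral_abs_bound)
  also have "\<dots> \<le> (\<integral>e. ?c * (indicator {0<..} e *\<^sub>R (phi \<beta> e * G e)) \<partial>lborel)"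
  proof (rule integral_mono_AE')
    show "integrable lborel (\<lambda>e. ?c * (indicator {0<..} e *\<^sub>R (phi \<beta> e * G e)))"
      by (rule phiG_integrable)
    show "AE e in lborel. 0 \<le> ?c * (indicator {0<..} e *\<^sub>R (phi \<beta> e * G e))"
      using phiG_nonneg z kpos Gnn[OF z(1)] phi_ge1[of z \<beta>] by (intro AE_I2 mult_nonneg_nonneg) auto
    show "AE e in lborel. \<bar>indicator S e *\<^sub>R (P z e * G z * G e)\<bar> \<le> ?c * (indicator {0<..} e *\<^sub>R (phi \<beta> e * G e))"
      using AE_lborel_singleton[of 1]
    proof eventually_elim
      case (elim e)
      show ?case
      proof (cases "e > 0")
        case True
        have h: "0 \<le> P z e * G z * G e" using Pnn Gnn z True by auto
        have "\<bar>indicator S e *\<^sub>R (P z e * G z * G e)\<bar> \<le> P z e * G z * G e"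
          using h by (auto simp: indicator_def)
        also have "\<dots> \<le> (k * phi \<beta> z * phi \<beta> e) * G z * G e"
          using Pbnd[OF z(1) True z(2) elim] Gnn z True by (intro mult_right_mono) auto
        also have "\<dots> = ?c * (indicator {0<..} e *\<^sub>R (phi \<beta> e * G e))"
          using True by simp
        finally show ?thesis .
      next
        case False
        then show ?thesis using Pzero[of z e] by simp
      qed
    qed
  qed
  also have "\<dots> = ?c * J" unfolding J_def set_lebesgue_integral_def by simp
  finally show ?thesis by (simp add: algebra_simps)
qed

lemma outer:
  assumes meas: "(\<lambda>z. indicator A z *\<^sub>R I z) \<in> borel_measurable borel"
    and A: "A \<subseteq> {0<..}"
    and bnd: "\<And>z. 0 < z \<Longrightarrow> z \<noteq> 1 \<Longrightarrow> z \<in> A \<Longrightarrow> \<bar>I z\<bar> \<le> k * J * phi \<beta> z * G z"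
  shows "set_integrable lborel A I" "\<bar>LINT z:A|lborel. I z\<bar> \<le> k * J * J"
proof -
  let ?f = "\<lambda>z. (k * J) * (indicator {0<..} z *\<^sub>R (phi \<beta> z * G z))"
  have fi: "integrable lborel ?f" by (rule phiG_integrable)
  have f0: "0 \<le> ?f z" for z using phiG_nonneg[of z] kpos J_nonneg by auto
  have ae: "AE z in lborel. \<bar>indicator A z *\<^sub>R I z\<bar> \<le> ?f z"
    using AE_lborel_singleton[of 1]
  proof eventually_elim
    case (elim z)
    show ?case
    proof (cases "z \<in> A")
      case True
      then have "z > 0" using A by auto
      then show ?thesis using bnd[OF _ elim True] True by (simp add: algebra_simps)
    next
      case False
      then show ?thesis using f0[of z] by simp
    qed
  qed
  show "set_integrable lborel A I"
    unfolding set_integrable_def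
    by (rule Bochner_Integration.integrable_bound[OF fi]) (use meas ae f0 in \<open>auto elim!: eventually_mono\<close>)
  have "\<bar>LINT z:A|lborel. I z\<bar> \<le> (\<integral>z. \<bar>indicator A z *\<^sub>R I z\<bar> \<partial>lborel)"
    unfolding set_lebesgue_integral_def by (rule integral_abs_bound)
  also have "\<dots> \<le> integral\<^sup>L lborel ?f"
    by (rule integral_mono_AE'[OF fi ae]) (use f0 in auto)
  also have "\<dots> = k * J * J" unfolding J_def set_lebesgue_integral_def by simp
  finally show "\<bar>LINT z:A|lborel. I z\<bar> \<le> k * J * J" .
qed

lemma P_meas_raw[measurable (raw)]:
  "h \<in> borel_measurable M \<Longrightarrow> h' \<in> borel_measurable M \<Longrightarrow> (\<lambda>x. P (h x) (h' x)) \<in> borel_measurable M"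
proof -
  assume "h \<in> borel_measurable M" "h' \<in> borel_measurable M"
  then have "(\<lambda>x. (h x, h' x)) \<in> measurable M borel"
    by (simp add: borel_prod[symmetric])
  from measurable_compose[OF this Pmeas] show ?thesis by simp
qed

lemma G_meas_raw[measurable (raw)]:
  "h \<in> borel_measurable M \<Longrightarrow> (\<lambda>x. G (h x)) \<in> borel_measurable M"
  using measurable_compose[OF _ Gmeas] by blast

lemma identity:
  assumes q: "q > 0"
  shows "(LINT z:{0<..}|lborel. (LINT e:{0<..}|lborel.
            (indicator {q..} (z + e) - indicator {q..} z - indicator {q..} e) * P z e * G z * G e))
    = (LINT z:{0<..q}|lborel. (LINT e:{q - z..q}|lborel. P z e * G z * G e))
      - (LINT z:{q..}|lborel. (LINT e:{q..}|lborel. P z e * G z * G e))"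
proof -
  define A' where "A' z = (LINT e:{q - z..<q}|lborel. P z e * G z * G e)" for z
  define B where "B z = (LINT e:{q..}|lborel. P z e * G z * G e)" for z
  have pw: "indicator {0<..} z *\<^sub>R (LINT e:{0<..}|lborel.
            (indicator {q..} (z + e) - indicator {q..} z - indicator {q..} e) * P z e * G z * G e)
      = indicator {0<..<q} z *\<^sub>R A' z - indicator {q..} z *\<^sub>R B z" for z
  proof -
    consider "z \<le> 0" | "0 < z" "z < q" | "q \<le> z" by linarith
    then show ?thesis
    proof cases
      case 1
      then show ?thesis using q by (simp add: indicator_def)
    next
      case 2
      have "(LINT e:{0<..}|lborel.
            (indicator {q..} (z + e) - indicator {q..} z - indicator {q..} e) * P z e * G z * G e) = A' z"
        unfolding A'_def set_lebesgue_integral_def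
        by (rule Bochner_Integration.integral_cong) (use 2 in \<open>auto simp: indicator_def\<close>)
      then show ?thesis using 2 by simp
    next
      case 3
      have "(LINT e:{0<..}|lborel.
            (indicator {q..} (z + e) - indicator {q..} z - indicator {q..} e) * P z e * G z * G e) = - B z"
        unfolding B_def set_lebesgue_integral_def integral_minus[symmetric]
        by (rule Bochner_Integration.integral_cong) (use 3 q in \<open>auto simp: indicator_def\<close>)
      then show ?thesis using 3 q by simp
    qed
  qed
  have mA: "(\<lambda>z. indicator {0<..<q} z *\<^sub>R A' z) \<in> borel_measurable borel"
    unfolding A'_def set_lebesgue_integral_def by measurable
  have mB: "(\<lambda>z. indicator {q..} z *\<^sub>R B z) \<in> borel_measurable borel"
    unfolding B_def set_lebesgue_integral_def by measurable
  have iA: "set_integrable lborel {0<..<q} A'"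
    by (rule outer(1)[OF mA]) (auto simp: A'_def intro!: inner_bnd)
  have iB: "set_integrable lborel {q..} B"
    by (rule outer(1)[OF mB]) (use q in \<open>auto simp: B_def intro!: inner_bnd\<close>)
  define W where "W z = (LINT e:{0<..}|lborel.
            (indicator {q..} (z + e) - indicator {q..} z - indicator {q..} e) * P z e * G z * G e)" for z
  have "(LINT z:{0<..}|lborel. (LINT e:{0<..}|lborel.
            (indicator {q..} (z + e) - indicator {q..} z - indicator {q..} e) * P z e * G z * G e))
     = (LINT z:{0<..}|lborel. W z)" by (simp add: W_def)
  also have "\<dots> = (LINT z:{0<..<q}|lborel. A' z) - (LINT z:{q..}|lborel. B z)"
    unfolding set_lebesgue_integral_def pw[folded W_def]
    using iA iB unfolding set_integrable_def
    by (rule Bochner_Integration.integral_diff)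
  also have "(LINT z:{0<..<q}|lborel. A' z) = (LINT z:{0<..q}|lborel. (LINT e:{q - z..q}|lborel. P z e * G z * G e))"
    unfolding set_lebesgue_integral_def[of _ "{0<..<q}"] set_lebesgue_integral_def[of _ "{0<..q}"]
  proof (rule integral_cong_pt[where c=q])
    show "(\<lambda>z. indicator {0<..<q} z *\<^sub>R A' z) \<in> borel_measurable lborel" using mA by simp
    fix z assume "z \<noteq> q"
    show "indicator {0<..<q} z *\<^sub>R A' z = indicator {0<..q} z *\<^sub>R (LINT e:{q - z..q}|lborel. P z e * G z * G e)"
    proof (cases "0 < z \<and> z < q")
      case True
      have "A' z = (LINT e:{q - z..q}|lborel. P z e * G z * G e)"
        unfolding A'_def set_lebesgue_integral_def
        by (rule integral_cong_pt[where c=q]) (auto simp: indicator_def)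
      then show ?thesis using True by simp
    next
      case False
      then show ?thesis using \<open>z \<noteq> q\<close> by (auto simp: indicator_def)
    qed
  qed
  finally show ?thesis unfolding B_def .
qed

lemma bounds:
  assumes q: "q > 0"
  shows "\<bar>LINT z:{0<..q}|lborel. (LINT e:{q - z..q}|lborel. P z e * G z * G e)\<bar> \<le> k * J * J"
    "\<bar>LINT z:{q..}|lborel. (LINT e:{q..}|lborel. P z e * G z * G e)\<bar> \<le> k * J * J"
proof -
  show "\<bar>LINT z:{0<..q}|lborel. (LINT e:{q - z..q}|lborel. P z e * G z * G e)\<bar> \<le> k * J * J"
  proof (rule outer(2))
    show "(\<lambda>z. indicator {0<..q} z *\<^sub>R (LINT e:{q - z..q}|lborel. P z e * G z * G e)) \<in> borel_measurable borel"
      unfolding set_lebesgue_integral_def by measurable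
  qed (auto intro!: inner_bnd)
  show "\<bar>LINT z:{q..}|lborel. (LINT e:{q..}|lborel. P z e * G z * G e)\<bar> \<le> k * J * J"
  proof (rule outer(2))
    show "(\<lambda>z. indicator {q..} z *\<^sub>R (LINT e:{q..}|lborel. P z e * G z * G e)) \<in> borel_measurable borel"
      unfolding set_lebesgue_integral_def by measurable
  qed (use q in \<open>auto intro!: inner_bnd\<close>)
qed

end


locale gm = fixes f :: "real \<Rightarrow> real \<Rightarrow> real"
  assumes fm: "(\<lambda>(z, s). f z s) \<in> borel_measurable borel"
begin
lemma f_raw[measurable (raw)]:
  "h \<in> borel_measurable M \<Longrightarrow> h' \<in> borel_measurable M \<Longrightarrow> (\<lambda>x. f (h x) (h' x)) \<in> borel_measurable M"
proof -
  assume "h \<in> borel_measurable M" "h' \<in> borel_measurable M"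
  then have "(\<lambda>x. (h x, h' x)) \<in> measurable M borel"
    by (simp add: borel_prod[symmetric])
  from measurable_compose[OF this fm] show ?thesis by simp
qed
end

theorem lemma3p2:
  fixes Psi :: "real \<Rightarrow> real \<Rightarrow> real" and \<beta> k :: real and T :: ereal
    and gin :: "real \<Rightarrow> real" and g :: "real \<Rightarrow> real \<Rightarrow> real" and t :: real
  assumes "kernel_assms Psi \<beta> k"
    and "T > 0"
    and "in_L1w \<beta> gin" and "\<forall>z>0. gin z \<ge> 0"
    and "weak_solution Psi \<beta> T gin g"
    and "0 < t" and "ereal t < T"
  shows "(\<forall>q>0.
           (\<integral>z\<in>{q..}. (g z t - gin z) \<partial>lborel) =
             - 1/2 * (\<integral>s\<in>{0..t}. (\<integral>z\<in>{q..}. (\<integral>e\<in>{q..}.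
                   Psi z e * g z s * g e s \<partial>lborel) \<partial>lborel) \<partial>lborel)
             + 1/2 * (\<integral>s\<in>{0..t}. (\<integral>z\<in>{0<..q}. (\<integral>e\<in>{q - z..q}.
                   Psi z e * g z s * g e s \<partial>lborel) \<partial>lborel) \<partial>lborel))
       \<and> ((\<lambda>q. \<integral>s\<in>{0..t}. q *
              ((\<integral>z\<in>{0<..q}. (\<integral>e\<in>{q - z..q}. Psi z e * g z s * g e s \<partial>lborel) \<partial>lborel)
             - (\<integral>z\<in>{q..}. (\<integral>e\<in>{q..}. Psi z e * g z s * g e s \<partial>lborel) \<partial>lborel)) \<partial>lborel)
           \<longlongrightarrow> 0) at_top"
proof -
  note K = assms(1)
  note W = assms(5)[unfolded weak_solution_def]
  have bpos: "\<beta> > 0" and kpos: "k > 0"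
    and Pm0: "(\<lambda>x. indicator ({0<..} \<times> {0<..}) x *\<^sub>R (case x of (z, e) \<Rightarrow> Psi z e)) \<in> borel_measurable borel"
    using K unfolding kernel_assms_def set_borel_measurable_def by auto
  define P where "P z e = indicator ({0<..} \<times> {0<..}) (z, e) * Psi z e" for z e :: real
  have Pmeas: "(\<lambda>(z, e). P z e) \<in> borel_measurable borel"
  proof -
    have "(\<lambda>(z, e). P z e) = (\<lambda>x. indicator ({0<..} \<times> {0<..}) x *\<^sub>R (case x of (z, e) \<Rightarrow> Psi z e))"
      by (auto simp: P_def fun_eq_iff)
    then show ?thesis using Pm0 by simp
  qed
  have PPsi: "0 < z \<Longrightarrow> 0 < e \<Longrightarrow> P z e = Psi z e" for z e by (simp add: P_def)
  have gmeas: "(\<lambda>(z, s). g z s) \<in> borel_measurable borel" using W by blast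
  interpret gG: gm g by (rule gm.intro[OF gmeas])
  interpret gP: gm P by (rule gm.intro[OF Pmeas])
  obtain C where C: "\<And>s. 0 \<le> s \<Longrightarrow> ereal s < T \<Longrightarrow> wnorm \<beta> (\<lambda>z. g z s) \<le> C"
    using W by blast
  have sT: "0 \<le> s \<Longrightarrow> s \<le> t \<Longrightarrow> ereal s < T" for s
    using assms(7) by (meson ereal_less_eq(3) order.strict_trans1)
  have sl: "slice P \<beta> k (\<lambda>z. g z s)" if s: "0 \<le> s" "s \<le> t" for s
  proof
    show "(\<lambda>(z, e). P z e) \<in> borel_measurable borel" by (rule Pmeas)
    show "0 \<le> P z e" for z e using K unfolding P_def kernel_assms_def by (auto simp: indicator_def)
    show "\<not> (0 < z \<and> 0 < e) \<Longrightarrow> P z e = 0" for z e by (auto simp: P_def)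
    show "0 < z \<Longrightarrow> 0 < e \<Longrightarrow> z \<noteq> 1 \<Longrightarrow> e \<noteq> 1 \<Longrightarrow> P z e \<le> k * phi \<beta> z * phi \<beta> e" for z e
      using psi_bnd[OF K] by (simp add: PPsi)
    show "\<beta> > 0" "k > 0" by (fact bpos kpos)+
    show "(\<lambda>z. g z s) \<in> borel_measurable borel" by measurable
    show "0 < z \<Longrightarrow> 0 \<le> g z s" for z using W s sT[OF s] by blast
    show "set_integrable lborel {0<..} (\<lambda>z. g z s * (z powr (-2*\<beta>) + z))"
      using W s sT[OF s] unfolding in_L1w_def by blast
  qed
  define Ap where "Ap q s = (LINT z:{0<..q}|lborel. (LINT e:{q - z..q}|lborel. P z e * g z s * g e s))" for q s
  define Bp where "Bp q s = (LINT z:{q..}|lborel. (LINT e:{q..}|lborel. P z e * g z s * g e s))" for q s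
  have convB: "(LINT z:{q..}|lborel. (LINT e:{q..}|lborel. Psi z e * g z s * g e s)) = Bp q s"
    if q: "q > 0" for q s
    unfolding Bp_def
    by (intro set_lebesgue_integral_cong allI impI) (use q in \<open>auto simp: PPsi\<close>)
  have convA: "(LINT z:{0<..q}|lborel. (LINT e:{q - z..q}|lborel. Psi z e * g z s * g e s)) = Ap q s"
    if q: "q > 0" for q s
    unfolding Ap_def set_lebesgue_integral_def[of _ "{0<..q}"]
  proof (rule integral_cong_pt[where c=q, symmetric])
    show "(\<lambda>z. indicator {0<..q} z *\<^sub>R (LINT e:{q - z..q}|lborel. P z e * g z s * g e s)) \<in> borel_measurable lborel"
      unfolding set_lebesgue_integral_def by measurable
    fix z assume "z \<noteq> q"
    show "indicator {0<..q} z *\<^sub>R (LINT e:{q - z..q}|lborel. P z e * g z s * g e s) =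
      indicator {0<..q} z *\<^sub>R (LINT e:{q - z..q}|lborel. Psi z e * g z s * g e s)"
    proof (cases "0 < z \<and> z < q")
      case True
      then show ?thesis
        by (simp, intro set_lebesgue_integral_cong allI impI) (auto simp: PPsi)
    next
      case False
      then show ?thesis using \<open>z \<noteq> q\<close> by (auto simp: indicator_def)
    qed
  qed
  have Jb: "slice.J \<beta> (\<lambda>z. g z s) \<le> 3 * C" "0 \<le> slice.J \<beta> (\<lambda>z. g z s)"
    if s: "0 \<le> s" "s \<le> t" for s
  proof -
    interpret slice P \<beta> k "\<lambda>z. g z s" by (rule sl[OF s])
    show "J \<le> 3 * C" using J_le C[OF s(1) sT[OF s]] by linarith
    show "0 \<le> J" by (rule J_nonneg)
  qed
  have bnds: "\<bar>Ap q s\<bar> \<le> k * (3 * C) * (3 * C)" "\<bar>Bp q s\<bar> \<le> k * (3 * C) * (3 * C)"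
    if s: "0 \<le> s" "s \<le> t" and q: "q > 0" for s q
  proof -
    interpret slice P \<beta> k "\<lambda>z. g z s" by (rule sl[OF s])
    have "k * J * J \<le> k * (3 * C) * (3 * C)"
      using Jb[OF s] kpos by (intro mult_mono mult_left_mono) auto
    then show "\<bar>Ap q s\<bar> \<le> k * (3 * C) * (3 * C)" "\<bar>Bp q s\<bar> \<le> k * (3 * C) * (3 * C)"
      using bounds[OF q] unfolding Ap_def Bp_def by linarith+
  qed
  have intA: "set_integrable lborel {0..t} (Ap q)" and intB: "set_integrable lborel {0..t} (Bp q)"
    if q: "q > 0" for q
  proof -
    have mA: "Ap q \<in> borel_measurable lborel" unfolding Ap_def set_lebesgue_integral_def by measurable
    have mB: "Bp q \<in> borel_measurable lborel" unfolding Bp_def set_lebesgue_integral_def by measurable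
    have fin: "emeasure lborel {0..t} < \<infinity>" using assms(6) by simp
    show "set_integrable lborel {0..t} (Ap q)"
      unfolding set_integrable_def
      by (rule integrableI_bounded_set_indicator[OF _ mA fin, where B="k * (3 * C) * (3 * C)"])
         (use bnds(1) q in auto)
    show "set_integrable lborel {0..t} (Bp q)"
      unfolding set_integrable_def
      by (rule integrableI_bounded_set_indicator[OF _ mB fin, where B="k * (3 * C) * (3 * C)"])
         (use bnds(2) q in auto)
  qed
  define L where "L q = (LINT z:{q..}|lborel. (g z t - gin z))" for q
  have WE: "\<forall>t \<omega>. 0 < t \<and> ereal t < T \<and> \<omega> \<in> borel_measurable borel \<and> (\<exists>M. \<forall>x>0. \<bar>\<omega> x\<bar> \<le> M) \<longrightarrow>
        (\<integral>z\<in>{0<..}. (g z t - gin z) * \<omega> z \<partial>lborel) =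
        1/2 * (\<integral>s\<in>{0..t}. (\<integral>z\<in>{0<..}. (\<integral>e\<in>{0<..}.
           (\<omega> (z + e) - \<omega> z - \<omega> e) * Psi z e * g z s * g e s \<partial>lborel) \<partial>lborel) \<partial>lborel)"
    using W by blast
  have main: "L q = 1/2 * ((LINT s:{0..t}|lborel. Ap q s) - (LINT s:{0..t}|lborel. Bp q s))"
    if q: "q > 0" for q
  proof -
    have bo: "\<exists>M. \<forall>x>0. \<bar>indicator {q..} x :: real\<bar> \<le> M" by (rule exI[of _ 1]) (simp add: indicator_def)
    have weq: "(LINT z:{0<..}|lborel. (g z t - gin z) * indicator {q..} z) =
        1/2 * (LINT s:{0..t}|lborel. (LINT z:{0<..}|lborel. (LINT e:{0<..}|lborel.
           (indicator {q..} (z + e) - indicator {q..} z - indicator {q..} e) * Psi z e * g z s * g e s)))"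
      using WE[rule_format, of t "indicator {q..}"] assms(6,7) bo by simp
    have lhs: "(LINT z:{0<..}|lborel. (g z t - gin z) * indicator {q..} z) = L q"
      unfolding L_def set_lebesgue_integral_def
      by (rule Bochner_Integration.integral_cong) (use q in \<open>auto simp: indicator_def\<close>)
    have inner: "(LINT z:{0<..}|lborel. (LINT e:{0<..}|lborel.
           (indicator {q..} (z + e) - indicator {q..} z - indicator {q..} e) * Psi z e * g z s * g e s))
         = Ap q s - Bp q s" if s: "s \<in> {0..t}" for s
    proof -
      interpret slice P \<beta> k "\<lambda>z. g z s" using sl s by auto
      have "(LINT z:{0<..}|lborel. (LINT e:{0<..}|lborel.
           (indicator {q..} (z + e) - indicator {q..} z - indicator {q..} e) * Psi z e * g z s * g e s))
         = (LINT z:{0<..}|lborel. (LINT e:{0<..}|lborel.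
           (indicator {q..} (z + e) - indicator {q..} z - indicator {q..} e) * P z e * g z s * g e s))"
        by (intro set_lebesgue_integral_cong allI impI) (auto simp: PPsi)
      also have "\<dots> = Ap q s - Bp q s"
        using identity[OF q] unfolding Ap_def Bp_def by simp
      finally show ?thesis .
    qed
    have "(LINT s:{0..t}|lborel. (LINT z:{0<..}|lborel. (LINT e:{0<..}|lborel.
           (indicator {q..} (z + e) - indicator {q..} z - indicator {q..} e) * Psi z e * g z s * g e s)))
         = (LINT s:{0..t}|lborel. Ap q s - Bp q s)"
      by (intro set_lebesgue_integral_cong allI impI) (auto simp: inner)
    also have "\<dots> = (LINT s:{0..t}|lborel. Ap q s) - (LINT s:{0..t}|lborel. Bp q s)"
      by (rule set_integral_diff(2)[OF intA[OF q] intB[OF q]])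
    finally show ?thesis using weq lhs by simp
  qed
  define f where "f z = g z t - gin z" for z
  define X where "X z = indicator {0<..} z *\<^sub>R (z * \<bar>f z\<bar>)" for z
  have gint: "set_integrable lborel {0<..} (\<lambda>z. g z t * (z powr (-2*\<beta>) + z))"
    using W assms(6,7) unfolding in_L1w_def by auto
  have ginint: "set_integrable lborel {0<..} (\<lambda>z. gin z * (z powr (-2*\<beta>) + z))"
    and ginm: "gin \<in> borel_measurable lborel"
    using assms(3) unfolding in_L1w_def by auto
  have fm: "f \<in> borel_measurable lborel" unfolding f_def using ginm by measurable
  have Xnn: "0 \<le> X z" for z unfolding X_def by (simp add: indicator_def)
  have Xint: "integrable lborel X"
  proof (rule Bochner_Integration.integrable_bound)
    show "integrable lborel (\<lambda>z. \<bar>indicator {0<..} z *\<^sub>R (g z t * (z powr (-2*\<beta>) + z))\<bar>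
        + \<bar>indicator {0<..} z *\<^sub>R (gin z * (z powr (-2*\<beta>) + z))\<bar>)"
      using gint ginint unfolding set_integrable_def by auto
    show "X \<in> borel_measurable lborel" unfolding X_def using fm by measurable
    show "AE z in lborel. norm (X z) \<le> norm (\<bar>indicator {0<..} z *\<^sub>R (g z t * (z powr (-2*\<beta>) + z))\<bar>
        + \<bar>indicator {0<..} z *\<^sub>R (gin z * (z powr (-2*\<beta>) + z))\<bar>)"
    proof (intro AE_I2)
      fix z :: real
      show "norm (X z) \<le> norm (\<bar>indicator {0<..} z *\<^sub>R (g z t * (z powr (-2*\<beta>) + z))\<bar>
        + \<bar>indicator {0<..} z *\<^sub>R (gin z * (z powr (-2*\<beta>) + z))\<bar>)"
      proof (cases "z > 0")
        case True
        have wz: "z \<le> z powr (-2*\<beta>) + z" by simp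
        have "z * \<bar>f z\<bar> \<le> z * \<bar>g z t\<bar> + z * \<bar>gin z\<bar>"
          using True unfolding f_def by (simp add: distrib_left[symmetric] abs_triangle_ineq4 mult_left_mono)
        also have "\<dots> \<le> \<bar>g z t\<bar> * (z powr (-2*\<beta>) + z) + \<bar>gin z\<bar> * (z powr (-2*\<beta>) + z)"
        proof -
          have h1: "\<bar>g z t\<bar> * z \<le> \<bar>g z t\<bar> * (z powr (-2*\<beta>) + z)" by (rule mult_left_mono[OF wz]) simp
          have h2: "\<bar>gin z\<bar> * z \<le> \<bar>gin z\<bar> * (z powr (-2*\<beta>) + z)" by (rule mult_left_mono[OF wz]) simp
          show ?thesis using h1 h2 mult.commute[of z "\<bar>g z t\<bar>"] mult.commute[of z "\<bar>gin z\<bar>"] by linarith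
        qed
        finally show ?thesis using True by (simp add: X_def abs_mult)
      qed (simp add: X_def)
    qed
  qed
  define D where "D q = (\<integral>z. indicator {q..} z *\<^sub>R X z \<partial>lborel)" for q
  have Dlim: "(D \<longlongrightarrow> 0) at_top"
  proof -
    have h1: "(\<lambda>_. 0::real) \<in> borel_measurable lborel" by simp
    have h2: "\<And>q. (\<lambda>z. indicator {q..} z *\<^sub>R X z) \<in> borel_measurable lborel"
      unfolding X_def using fm by measurable
    have h4: "AE z in lborel. ((\<lambda>q. indicator {q..} z *\<^sub>R X z) \<longlongrightarrow> 0) at_top"
    proof (intro AE_I2 tendsto_eventually)
      fix z :: real
      show "\<forall>\<^sub>F q in at_top. indicator {q..} z *\<^sub>R X z = 0"
        using eventually_gt_at_top[of z] by eventually_elim (simp add: indicator_def)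
    qed
    have h5: "\<forall>\<^sub>F q in at_top. AE z in lborel. norm (indicator {q..} z *\<^sub>R X z) \<le> X z"
      by (intro always_eventually allI AE_I2) (auto simp: indicator_def Xnn)
    have "((\<lambda>q. \<integral>z. indicator {q..} z *\<^sub>R X z \<partial>lborel) \<longlongrightarrow> integral\<^sup>L lborel (\<lambda>_. 0::real)) at_top"
      using integral_dominated_convergence_at_top[of "\<lambda>_. 0::real" lborel "\<lambda>q z. indicator {q..} z *\<^sub>R X z" X, OF h1 h2 Xint h4 h5]
      by simp
    then show ?thesis unfolding D_def by simp
  qed
  have Lb: "\<bar>q * L q\<bar> \<le> D q" if q: "q > 0" for q
  proof -
    have "q * L q = (\<integral>z. indicator {q..} z *\<^sub>R (q * f z) \<partial>lborel)"
      unfolding L_def f_def set_lebesgue_integral_def integral_mult_right_zero[symmetric]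
      by (simp add: algebra_simps)
    also have "\<bar>\<dots>\<bar> \<le> (\<integral>z. \<bar>indicator {q..} z *\<^sub>R (q * f z)\<bar> \<partial>lborel)"
      by (rule integral_abs_bound)
    also have "\<dots> \<le> D q"
      unfolding D_def
    proof (rule integral_mono')
      show "integrable lborel (\<lambda>z. indicator {q..} z *\<^sub>R X z)"
        by (rule Bochner_Integration.integrable_bound[OF Xint])
           (use fm in \<open>unfold X_def; measurable\<close>, auto simp: indicator_def X_def)
      fix z :: real
      show "0 \<le> indicator {q..} z *\<^sub>R X z" using Xnn[of z] by (simp add: indicator_def)
      show "\<bar>indicator {q..} z *\<^sub>R (q * f z)\<bar> \<le> indicator {q..} z *\<^sub>R X z"
        using q by (auto simp: indicator_def X_def abs_mult intro: mult_right_mono)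
    qed
    finally show ?thesis .
  qed
  have part1: "\<forall>q>0.
           (\<integral>z\<in>{q..}. (g z t - gin z) \<partial>lborel) =
             - 1/2 * (\<integral>s\<in>{0..t}. (\<integral>z\<in>{q..}. (\<integral>e\<in>{q..}.
                   Psi z e * g z s * g e s \<partial>lborel) \<partial>lborel) \<partial>lborel)
             + 1/2 * (\<integral>s\<in>{0..t}. (\<integral>z\<in>{0<..q}. (\<integral>e\<in>{q - z..q}.
                   Psi z e * g z s * g e s \<partial>lborel) \<partial>lborel) \<partial>lborel)"
  proof (intro allI impI)
    fix q :: real assume q: "q > 0"
    show "(\<integral>z\<in>{q..}. (g z t - gin z) \<partial>lborel) =
             - 1/2 * (\<integral>s\<in>{0..t}. (\<integral>z\<in>{q..}. (\<integral>e\<in>{q..}.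
                   Psi z e * g z s * g e s \<partial>lborel) \<partial>lborel) \<partial>lborel)
             + 1/2 * (\<integral>s\<in>{0..t}. (\<integral>z\<in>{0<..q}. (\<integral>e\<in>{q - z..q}.
                   Psi z e * g z s * g e s \<partial>lborel) \<partial>lborel) \<partial>lborel)"
      unfolding convA[OF q] convB[OF q] main[OF q, unfolded L_def] by simp
  qed
  have tgt: "(\<integral>s\<in>{0..t}. q *
              ((\<integral>z\<in>{0<..q}. (\<integral>e\<in>{q - z..q}. Psi z e * g z s * g e s \<partial>lborel) \<partial>lborel)
             - (\<integral>z\<in>{q..}. (\<integral>e\<in>{q..}. Psi z e * g z s * g e s \<partial>lborel) \<partial>lborel)) \<partial>lborel)
        = 2 * (q * L q)" if q: "q > 0" for q
    unfolding convA[OF q] convB[OF q] set_integral_mult_right set_integral_diff(2)[OF intA[OF q] intB[OF q]]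
      main[OF q] by simp
  have part2: "((\<lambda>q. \<integral>s\<in>{0..t}. q *
              ((\<integral>z\<in>{0<..q}. (\<integral>e\<in>{q - z..q}. Psi z e * g z s * g e s \<partial>lborel) \<partial>lborel)
             - (\<integral>z\<in>{q..}. (\<integral>e\<in>{q..}. Psi z e * g z s * g e s \<partial>lborel) \<partial>lborel)) \<partial>lborel)
           \<longlongrightarrow> 0) at_top"
  proof (rule Lim_null_comparison)
    show "((\<lambda>q. 2 * D q) \<longlongrightarrow> 0) at_top" using tendsto_mult_right_zero[OF Dlim, of 2] by simp
    show "\<forall>\<^sub>F q in at_top. norm (\<integral>s\<in>{0..t}. q *
              ((\<integral>z\<in>{0<..q}. (\<integral>e\<in>{q - z..q}. Psi z e * g z s * g e s \<partial>lborel) \<partial>lborel)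
             - (\<integral>z\<in>{q..}. (\<integral>e\<in>{q..}. Psi z e * g z s * g e s \<partial>lborel) \<partial>lborel)) \<partial>lborel) \<le> 2 * D q"
      using eventually_gt_at_top[of 0]
    proof eventually_elim
      case (elim q)
      show ?case unfolding tgt[OF elim] using Lb[OF elim] by simp
    qed
  qed
  show ?thesis using part1 part2 by blast
qed
end
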